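(* Let $T:X\rightrightarrows X^*$ be a multivalued operator. If $\operatorname{co}(\mathrm{dom}(T))\subset\mathrm{dom}(T^\rho)$, then $T$ is pseudomonotone. In particular, if $\mathrm{dom}(T^\rho)=X$, then $T$ is pseudomonotone.
   Context: $X$ is a real Banach space with dual $X^*$ and pairing $\langle x,x^*\rangle=x^*(x)$. A multivalued operator $T:X\rightrightarrows X^*$ is identified with its graph $T\subset X\times X^*$; $\mathrm{dom}(T)=\{x: \exists x^*,\ (x,x^* )\in T\}$; $\operatorname{co}$ denotes the convex hull. For $(x,x^* ),(y,y^* )\in X\times X^*$, write $(x,x^* )\sim_p(y,y^* )$ if either $\min\{\langle x-y,y^*\rangle,\langle y-x,x^*\rangle\}<0$ or $\langle x-y,y^*\rangle=\langle y-x,x^*\rangle=0$. The pseudomonotone polar of $T$ is $T^\rho=\{(x,x^* )\in X\times X^*: (x,x^* )\sim_p(y,y^* )\ \forall (y,y^* )\in T\}$. $T$ is pseudomonotone if for all $(x,x^* ),(y,y^* )\in T$, $\langle y-x,x^*\rangle\ge0$ implies $\langle y-x,y^*\rangle\ge0$. *)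

theory Defs
  imports "HOL-Analysis.Analysis"
begin

text \<open>The dual X* of a real Banach space X is modelled as the space of bounded
  linear functionals 'a \<Rightarrow>L real; the pairing is blinfun_apply.\<close>

type_synonym 'a mvop = "('a \<times> ('a \<Rightarrow>\<^sub>L real)) set"

definition op_dom :: "'a mvop \<Rightarrow> 'a set" where
  "op_dom T = {x. \<exists>x'. (x, x') \<in> T}"

definition sim_p :: "('a::real_normed_vector \<times> ('a \<Rightarrow>\<^sub>L real)) \<Rightarrow> ('a \<times> ('a \<Rightarrow>\<^sub>L real)) \<Rightarrow> bool" where
  "sim_p p q = (let (x, x') = p; (y, y') = q in
     min (blinfun_apply y' (x - y)) (blinfun_apply x' (y - x)) < 0 \<or>
     (blinfun_apply y' (x - y) = 0 \<and> blinfun_apply x' (y - x) = 0))"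

definition pm_polar :: "('a::real_normed_vector) mvop \<Rightarrow> 'a mvop" where
  "pm_polar T = {p. \<forall>q\<in>T. sim_p p q}"

definition pseudomonotone :: "('a::real_normed_vector) mvop \<Rightarrow> bool" where
  "pseudomonotone T = (\<forall>x x' y y'. (x, x') \<in> T \<longrightarrow> (y, y') \<in> T \<longrightarrow>
     blinfun_apply x' (y - x) \<ge> 0 \<longrightarrow> blinfun_apply y' (y - x) \<ge> 0)"

end

theory Submission
  imports Defs
begin

lemma part1:
  fixes T :: "('a::banach) mvop"
  assumes H: "convex hull (op_dom T) \<subseteq> op_dom (pm_polar T)"
  shows "pseudomonotone T"
  unfolding pseudomonotone_def
proof (intro allI impI, rule ccontr)
  fix x x' y y'
  assume xT: "(x, x') \<in> T" and yT: "(y, y') \<in> T" and a1: "blinfun_apply x' (y - x) \<ge> 0"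
    and a2: "\<not> blinfun_apply y' (y - x) \<ge> 0"
  define z where "z = (1/2::real) *\<^sub>R x + (1/2::real) *\<^sub>R y"
  have "x \<in> op_dom T" "y \<in> op_dom T" using xT yT unfolding op_dom_def by auto
  hence "z \<in> convex hull (op_dom T)" unfolding z_def
    by (intro convexD[OF convex_convex_hull]) (auto intro: hull_inc)
  with H obtain z' where zP: "(z, z') \<in> pm_polar T" unfolding op_dom_def by auto
  have s1: "sim_p (z, z') (x, x')" and s2: "sim_p (z, z') (y, y')"
    using zP xT yT unfolding pm_polar_def by auto
  have e1: "z - y = (-1/2::real) *\<^sub>R (y - x)" unfolding z_def by (simp add: algebra_simps flip: scaleR_add_left)
  have e2: "y - z = (1/2::real) *\<^sub>R (y - x)" unfolding z_def by (simp add: algebra_simps flip: scaleR_add_left)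
  have e3: "z - x = (1/2::real) *\<^sub>R (y - x)" unfolding z_def by (simp add: algebra_simps flip: scaleR_add_left)
  have e4: "x - z = (-1/2::real) *\<^sub>R (y - x)" unfolding z_def by (simp add: algebra_simps flip: scaleR_add_left)
  from s2 have "min (blinfun_apply y' (z - y)) (blinfun_apply z' (y - z)) < 0 \<or>
     (blinfun_apply y' (z - y) = 0 \<and> blinfun_apply z' (y - z) = 0)"
    unfolding sim_p_def by simp
  hence b: "blinfun_apply z' (y - x) < 0" using a2
    unfolding e1 e2 blinfun.scaleR_right by (auto simp: min_def split: if_splits)
  from s1 have "min (blinfun_apply x' (z - x)) (blinfun_apply z' (x - z)) < 0 \<or>
     (blinfun_apply x' (z - x) = 0 \<and> blinfun_apply z' (x - z) = 0)"
    unfolding sim_p_def by simp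
  thus False using a1 b
    unfolding e3 e4 blinfun.scaleR_right by (auto simp: min_def split: if_splits)
qed

theorem mainTheorem8:
  fixes T :: "('a::banach) mvop"
  shows "(convex hull (op_dom T) \<subseteq> op_dom (pm_polar T) \<longrightarrow> pseudomonotone T) \<and>
         (op_dom (pm_polar T) = UNIV \<longrightarrow> pseudomonotone T)"
  using part1[of T] by auto

end
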